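(* Let $\Gamma'$ be a triangulation of a connected closed surface $M$. For every zigzag $e_1,e_2,e_3,\dots$ of $\Gamma'$ there are edges $e_i',e_i''$ of $\mathrm{T}(\Gamma')$ (joining the centre of the face containing $e_i,e_{i+1}$ to vertices of that face) such that $e_1,e_1',e_1'',e_2,e_2',e_2'',e_3,\dots$ is a zigzag of $\mathrm{T}(\Gamma')$, and it passes through each edge of $\Gamma'$ in the direction opposite to that of the original zigzag. Consequently every $z$-orientation $\tau'$ of $\Gamma'$ induces a $z$-orientation $t(\tau')$ of $\mathrm{T}(\Gamma')$ with $t(\tau'^{-1})=t(\tau')^{-1}$, and $\mathrm{T}(\Gamma')$ is $z$-knotted if and only if $\Gamma'$ is $z$-knotted.
   Context: A triangulation of a connected closed surface $M$ is a $2$-cell embedding of a connected simple finite graph in $M$ with all faces triangles. A zigzag is a sequence of edges $(e_i)$ such that $e_i,e_{i+1}$ are distinct edges of a common face, the face containing $e_i,e_{i+1}$ differs from that containing $e_{i+1},e_{i+2}$, and $e_i,e_{i+2}$ have no common vertex; it is a cyclic sequence, passing through each edge in a definite direction (from the vertex shared with the previous edge to the vertex shared with the next); its reversal is a zigzag. $z$-knotted means exactly two zigzags $Z,Z^{-1}$. A $z$-orientation is a set containing exactly one of $Z,Z^{-1}$ for each zigzag $Z$; $\tau^{-1}$ is the set of reversals. For a closed $2$-cell embedding $\Gamma'$ (every face a closed disc), $\mathrm{T}(\Gamma')$ is the triangulation obtained by adding a point $v_F$ in the interior of each face $F$ and joining it to all vertices of $F$. *)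

theory Defs
  imports Main
begin

text \<open>Combinatorial model of a triangulation of a connected closed surface:
  a finite set F of faces, each face being the 3-element set of its vertices.\<close>

definition edges :: "'a set set \<Rightarrow> 'a set set" where
  "edges F = {e. card e = 2 \<and> (\<exists>f\<in>F. e \<subseteq> f)}"

definition link_connected :: "'a set set \<Rightarrow> 'a \<Rightarrow> bool" where
  "link_connected F v \<longleftrightarrow>
     (\<forall>u w. {u, v} \<in> edges F \<longrightarrow> {w, v} \<in> edges F \<longrightarrow>
        (\<lambda>x y. {v, x, y} \<in> F)\<^sup>*\<^sup>* u w)"

definition graph_connected :: "'a set set \<Rightarrow> bool" where
  "graph_connected F \<longleftrightarrow>
     (\<forall>u\<in>\<Union>F. \<forall>w\<in>\<Union>F. (\<lambda>x y. {x, y} \<in> edges F)\<^sup>*\<^sup>* u w)"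

definition triangulation :: "'a set set \<Rightarrow> bool" where
  "triangulation F \<longleftrightarrow> finite F \<and> F \<noteq> {} \<and> (\<forall>f\<in>F. card f = 3) \<and>
     (\<forall>e\<in>edges F. card {f\<in>F. e \<subseteq> f} = 2) \<and>
     (\<forall>v\<in>\<Union>F. link_connected F v) \<and> graph_connected F"

definition face_of :: "'a set set \<Rightarrow> 'a set \<Rightarrow> 'a set \<Rightarrow> 'a set" where
  "face_of F e e' = (THE f. f \<in> F \<and> e \<subseteq> f \<and> e' \<subseteq> f)"

text \<open>Zigzags as (bi-infinite, periodic = cyclic) sequences of edges.\<close>
definition zigzag :: "'a set set \<Rightarrow> (int \<Rightarrow> 'a set) \<Rightarrow> bool" where
  "zigzag F z \<longleftrightarrow> (\<exists>n>0. \<forall>i. z (i + n) = z i) \<and>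
     (\<forall>i. z i \<in> edges F \<and> z i \<noteq> z (i + 1) \<and>
          (\<exists>f\<in>F. z i \<subseteq> f \<and> z (i + 1) \<subseteq> f) \<and>
          face_of F (z i) (z (i + 1)) \<noteq> face_of F (z (i + 1)) (z (i + 2)) \<and>
          z i \<inter> z (i + 2) = {})"

definition zz_dir :: "(int \<Rightarrow> 'a set) \<Rightarrow> int \<Rightarrow> 'a \<times> 'a" where
  "zz_dir z i = ((THE x. x \<in> z (i - 1) \<inter> z i), (THE x. x \<in> z i \<inter> z (i + 1)))"

text \<open>A zigzag as a cyclic sequence = class of sequences up to shift.\<close>
definition cyc_class :: "(int \<Rightarrow> 'b) \<Rightarrow> (int \<Rightarrow> 'b) set" where
  "cyc_class z = range (\<lambda>k. (\<lambda>i. z (i + k)))"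

definition zigzags :: "'a set set \<Rightarrow> (int \<Rightarrow> 'a set) set set" where
  "zigzags F = {cyc_class z | z. zigzag F z}"

definition rev_seq :: "(int \<Rightarrow> 'b) \<Rightarrow> (int \<Rightarrow> 'b)" where
  "rev_seq z = (\<lambda>i. z (- i))"

definition rev_zz :: "(int \<Rightarrow> 'b) set \<Rightarrow> (int \<Rightarrow> 'b) set" where
  "rev_zz Z = rev_seq ` Z"

definition z_knotted :: "'a set set \<Rightarrow> bool" where
  "z_knotted F \<longleftrightarrow> (\<exists>Z. zigzags F = {Z, rev_zz Z} \<and> Z \<noteq> rev_zz Z)"

definition z_orientation :: "'a set set \<Rightarrow> (int \<Rightarrow> 'a set) set set \<Rightarrow> bool" where
  "z_orientation F \<tau> \<longleftrightarrow> \<tau> \<subseteq> zigzags F \<and>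
     (\<forall>Z\<in>zigzags F. (Z \<in> \<tau>) \<noteq> (rev_zz Z \<in> \<tau>))"

definition inv_orient :: "(int \<Rightarrow> 'b) set set \<Rightarrow> (int \<Rightarrow> 'b) set set" where
  "inv_orient \<tau> = rev_zz ` \<tau>"

text \<open>T(F): add a centre Inr f in each face f and join it to the vertices of f.\<close>
definition Tri :: "'a set set \<Rightarrow> ('a + 'a set) set set" where
  "Tri F = {insert (Inr f) (Inl ` e) | f e. f \<in> F \<and> e \<in> edges F \<and> e \<subseteq> f}"

definition interleave ::
  "(int \<Rightarrow> 'a set) \<Rightarrow> (int \<Rightarrow> ('a + 'a set) set) \<Rightarrow> (int \<Rightarrow> ('a + 'a set) set)
     \<Rightarrow> int \<Rightarrow> ('a + 'a set) set" where
  "interleave z e1 e2 k =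
     (if k mod 3 = 0 then Inl ` z (k div 3)
      else if k mod 3 = 1 then e1 (k div 3) else e2 (k div 3))"

definition interleaved ::
  "'a set set \<Rightarrow> (int \<Rightarrow> 'a set) \<Rightarrow> (int \<Rightarrow> ('a + 'a set) set) \<Rightarrow> bool" where
  "interleaved F z w \<longleftrightarrow> (\<exists>e1 e2.
     (\<forall>i. \<exists>u\<in>face_of F (z i) (z (i + 1)). e1 i = {Inr (face_of F (z i) (z (i + 1))), Inl u}) \<and>
     (\<forall>i. \<exists>u\<in>face_of F (z i) (z (i + 1)). e2 i = {Inr (face_of F (z i) (z (i + 1))), Inl u}) \<and>
     w = interleave z e1 e2)"

definition induced :: "'a set set \<Rightarrow> (int \<Rightarrow> 'a set) set set
     \<Rightarrow> (int \<Rightarrow> ('a + 'a set) set) set set" where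
  "induced F \<tau> = {W \<in> zigzags (Tri F). \<exists>Z\<in>\<tau>. \<exists>z\<in>Z. \<exists>w\<in>W. interleaved F z w}"

end

theory Submission
  imports Defs
begin


definition shift :: "int \<Rightarrow> (int \<Rightarrow> 'b) \<Rightarrow> int \<Rightarrow> 'b" where
  "shift k z = (\<lambda>i. z (i + k))"

definition edg :: "(int \<Rightarrow> 'b) \<Rightarrow> int \<Rightarrow> 'b set" where
  "edg s = (\<lambda>i. {s i, s (i + 1)})"

definition vzz :: "'b set set \<Rightarrow> (int \<Rightarrow> 'b) \<Rightarrow> bool" where
  "vzz G s \<longleftrightarrow> (\<exists>n>0. \<forall>i. s (i + n) = s i) \<and>
     (\<forall>i. {s i, s (i+1), s (i+2)} \<in> G \<and> s i \<noteq> s (i+1) \<and> s i \<noteq> s (i+2) \<and> s i \<noteq> s (i+3))"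

definition vs :: "(int \<Rightarrow> 'b set) \<Rightarrow> int \<Rightarrow> 'b" where
  "vs z i = (THE x. x \<in> z (i - 1) \<inter> z i)"

lemma face_of_eq:
  assumes c3: "\<forall>f\<in>G. card f = 3" and "e \<union> e' \<in> G" "card (e \<union> e') = 3"
  shows "face_of G e e' = e \<union> e'"
  unfolding face_of_def
proof (rule the_equality)
  show "e \<union> e' \<in> G \<and> e \<subseteq> e \<union> e' \<and> e' \<subseteq> e \<union> e'" using assms by auto
next
  fix f assume f: "f \<in> G \<and> e \<subseteq> f \<and> e' \<subseteq> f"
  then have "card f = 3" using c3 by auto
  then have "finite f" by (metis card.infinite zero_neq_numeral)
  then show "f = e \<union> e'" using card_subset_eq[of f "e \<union> e'"] f assms(3) \<open>card f = 3\<close> by auto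
qed

lemma face_of_sym: "face_of G e e' = face_of G e' e"
  unfolding face_of_def by meson

lemma two_in_three:
  assumes "card e = 2" "card e' = 2" "e \<noteq> e'" "e \<subseteq> f" "e' \<subseteq> f" "card f = 3"
  shows "\<exists>x. e \<inter> e' = {x}"
proof -
  have fin: "finite e" "finite e'" "finite f" using assms
    by (metis card.infinite zero_neq_numeral)+
  have "card (e \<union> e') \<le> 3" using card_mono[OF fin(3), of "e \<union> e'"] assms by auto
  moreover have "card e + card e' = card (e \<union> e') + card (e \<inter> e')" using card_Un_Int fin by blast
  ultimately have 1: "card (e \<inter> e') \<ge> 1" using assms by linarith
  have "e \<inter> e' \<noteq> e"
  proof
    assume "e \<inter> e' = e" then have "e \<subseteq> e'" by blast
    then have "e = e'" using card_subset_eq fin assms by metis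
    then show False using assms by blast
  qed
  then have "card (e \<inter> e') < 2" using assms fin
    by (metis Int_lower1 card_seteq linorder_not_le)
  then have "card (e \<inter> e') = Suc 0" using 1 by linarith
  then show ?thesis using card_1_singleton_iff by blast
qed

lemma vzz_zigzag:
  assumes c3: "\<forall>f\<in>G. card f = 3" and v: "vzz G s"
  shows "zigzag G (edg s)"
proof -
  obtain n where n: "n > 0" "\<forall>i. s (i + n) = s i" using v unfolding vzz_def by blast
  have P: "\<And>i. {s i, s (i+1), s (i+2)} \<in> G \<and> s i \<noteq> s (i+1) \<and> s i \<noteq> s (i+2) \<and> s i \<noteq> s (i+3)"
    using v unfolding vzz_def by blast
  have per: "\<forall>i. edg s (i + n) = edg s i"
  proof
    fix i
    have "s (i + 1 + n) = s (i + 1)" using n by blast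
    then show "edg s (i + n) = edg s i" unfolding edg_def using n by (simp add: ac_simps)
  qed
  have "\<forall>i. edg s i \<in> edges G \<and> edg s i \<noteq> edg s (i + 1) \<and>
          (\<exists>f\<in>G. edg s i \<subseteq> f \<and> edg s (i + 1) \<subseteq> f) \<and>
          face_of G (edg s i) (edg s (i + 1)) \<noteq> face_of G (edg s (i + 1)) (edg s (i + 2)) \<and>
          edg s i \<inter> edg s (i + 2) = {}"
  proof
    fix i
    define a b c d where "a = s i" "b = s (i+1)" "c = s (i+2)" "d = s (i+3)"
    have h0: "{a,b,c} \<in> G" "a \<noteq> b" "a \<noteq> c" "a \<noteq> d" using P[of i] a_b_c_d_def by auto
    have h1: "{b,c,d} \<in> G" "b \<noteq> c" "b \<noteq> d" using P[of "i+1"] a_b_c_d_def by (auto simp: ac_simps)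
    have h2: "c \<noteq> d" using P[of "i+2"] a_b_c_d_def by (auto simp: ac_simps)
    have e: "edg s i = {a,b}" "edg s (i+1) = {b,c}" "edg s (i+2) = {c,d}"
      unfolding edg_def a_b_c_d_def by (auto simp: ac_simps)
    have f1: "face_of G {a,b} {b,c} = {a,b,c}"
      using face_of_eq[OF c3, of "{a,b}" "{b,c}"] h0 h1 h2 by (simp add: insert_commute)
    have f2: "face_of G {b,c} {c,d} = {b,c,d}"
      using face_of_eq[OF c3, of "{b,c}" "{c,d}"] h0 h1 h2 by (simp add: insert_commute)
    have "{a,b} \<in> edges G" unfolding edges_def using h0 by auto
    then show "edg s i \<in> edges G \<and> edg s i \<noteq> edg s (i + 1) \<and>
          (\<exists>f\<in>G. edg s i \<subseteq> f \<and> edg s (i + 1) \<subseteq> f) \<and>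
          face_of G (edg s i) (edg s (i + 1)) \<noteq> face_of G (edg s (i + 1)) (edg s (i + 2)) \<and>
          edg s i \<inter> edg s (i + 2) = {}"
      unfolding e f1 f2 using h0 h1 h2 by (auto simp: doubleton_eq_iff)
  qed
  then show ?thesis unfolding zigzag_def using per n by blast
qed

lemma vzz_dir:
  assumes v: "vzz G s"
  shows "zz_dir (edg s) i = (s i, s (i + 1))"
proof -
  have P: "\<And>i. s i \<noteq> s (i+1) \<and> s i \<noteq> s (i+2)"
    using v unfolding vzz_def by blast
  have "s (i - 1) \<noteq> s i" using P[of "i-1"] by simp
  moreover have "s (i - 1) \<noteq> s (i+1)" using P[of "i-1"] by (simp add: algebra_simps)
  moreover have "s i \<noteq> s (i+1)" using P[of i] by simp
  ultimately have "edg s (i - 1) \<inter> edg s i = {s i}" unfolding edg_def by auto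
  moreover have "edg s i \<inter> edg s (i+1) = {s (i+1)}"
    using P[of i] P[of "i+1"] unfolding edg_def by (auto simp: ac_simps)
  ultimately show ?thesis unfolding zz_dir_def by simp
qed


lemma zigzag_vzz:
  assumes c3: "\<forall>f\<in>G. card f = 3" and zz: "zigzag G z"
  shows "vzz G (vs z) \<and> z = edg (vs z)"
proof -
  obtain n where n: "n > 0" "\<forall>i. z (i + n) = z i" using zz unfolding zigzag_def by blast
  have Z: "\<And>i. z i \<in> edges G \<and> z i \<noteq> z (i + 1) \<and>
          (\<exists>f\<in>G. z i \<subseteq> f \<and> z (i + 1) \<subseteq> f) \<and>
          face_of G (z i) (z (i + 1)) \<noteq> face_of G (z (i + 1)) (z (i + 2)) \<and>
          z i \<inter> z (i + 2) = {}" using zz unfolding zigzag_def by blast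
  have c2: "\<And>i. card (z i) = 2" using Z unfolding edges_def by blast
  have Zd: "\<And>i. z i \<inter> z (i + 2) = {}" using Z by blast
  have Zn: "\<And>i. z i \<noteq> z (i + 1)" using Z by blast
  have Zf: "\<And>i. \<exists>f\<in>G. z i \<subseteq> f \<and> z (i + 1) \<subseteq> f" using Z by blast
  have sing: "\<And>i. z (i - 1) \<inter> z i = {vs z i}"
  proof -
    fix i
    obtain f where f: "f \<in> G" "z (i-1) \<subseteq> f" "z i \<subseteq> f" using Zf[of "i-1"] by auto
    have "z (i - 1) \<noteq> z i" using Zn[of "i-1"] by simp
    then obtain x where x: "z (i - 1) \<inter> z i = {x}"
      using two_in_three[OF c2 c2 _ f(2,3)] c3 f(1) by blast
    then have "vs z i = x" unfolding vs_def by auto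
    then show "z (i - 1) \<inter> z i = {vs z i}" using x by simp
  qed
  define s where "s = vs z"
  have s1: "\<And>i. s i \<in> z i" "\<And>i. s (i+1) \<in> z i" "\<And>i. s i \<in> z (i - 1)"
    using sing unfolding s_def apply blast
    using sing[of "i+1" for i] unfolding s_def apply force
    using sing unfolding s_def by blast
  have sne: "\<And>i. s i \<noteq> s (i+1)"
  proof
    fix i assume eq: "s i = s (i+1)"
    have "s (i+1) \<in> z (i - 1 + 2)" using s1(1)[of "i+1"] by (simp add: algebra_simps)
    then have "s i \<in> z (i - 1) \<inter> z (i - 1 + 2)" using s1(3)[of i] eq by simp
    then show False using Zd[of "i-1"] by blast
  qed
  have zeq: "\<And>i. z i = {s i, s (i+1)}"
  proof -
    fix i
    have fz: "finite (z i)" using c2[of i] by (metis card.infinite zero_neq_numeral)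
    have "{s i, s (i+1)} \<subseteq> z i" using s1(1)[of i] s1(2)[of i] by blast
    moreover have "card {s i, s (i+1)} = 2" using sne[of i] by simp
    ultimately show "z i = {s i, s (i+1)}" using card_subset_eq[OF fz] c2[of i] by metis
  qed
  have ze: "z = edg s" unfolding edg_def using zeq by auto
  have V: "\<forall>i. {s i, s (i+1), s (i+2)} \<in> G \<and> s i \<noteq> s (i+1) \<and> s i \<noteq> s (i+2) \<and> s i \<noteq> s (i+3)"
  proof
    fix i
    have d: "{s i, s (i+1)} \<inter> {s (i+2), s (i+3)} = {}"
      using Zd[of i] zeq[of i] zeq[of "i+2"] by (simp add: ac_simps)
    have ne2: "s (i+1) \<noteq> s (i+2)" using sne[of "i+1"] by (simp add: ac_simps)
    obtain f where f: "f \<in> G" "z i \<subseteq> f" "z (i+1) \<subseteq> f" using Zf[of i] by auto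
    have sub: "{s i, s (i+1), s (i+2)} \<subseteq> f" using f zeq[of i] zeq[of "i+1"] by (auto simp: ac_simps)
    have c3': "card {s i, s (i+1), s (i+2)} = 3" using d ne2 sne[of i] by auto
    have "card f = 3" using c3 f by auto
    then have "finite f" by (metis card.infinite zero_neq_numeral)
    then have "{s i, s (i+1), s (i+2)} = f" using card_subset_eq sub c3' \<open>card f = 3\<close> by metis
    then show "{s i, s (i+1), s (i+2)} \<in> G \<and> s i \<noteq> s (i+1) \<and> s i \<noteq> s (i+2) \<and> s i \<noteq> s (i+3)"
      using f d sne[of i] by auto
  qed
  have "\<forall>i. s (i + n) = s i"
  proof
    fix i
    have "z (i - 1 + n) = z (i - 1)" using n by blast
    then have "z (i + n - 1) = z (i - 1)" by (simp add: algebra_simps)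
    moreover have "z (i + n) = z i" using n by blast
    ultimately show "s (i + n) = s i" unfolding s_def vs_def by simp
  qed
  then have "vzz G s" unfolding vzz_def using V n by blast
  then show ?thesis unfolding s_def[symmetric] using ze by blast
qed


lemma tri_card: "X \<in> Tri F \<Longrightarrow> card X = 3"
proof -
  assume "X \<in> Tri F"
  then obtain f e where X: "X = insert (Inr f) (Inl ` e)" "e \<in> edges F"
    unfolding Tri_def by blast
  then have "card e = 2" unfolding edges_def by blast
  then have "card (Inl ` e :: ('a + 'a set) set) = 2" by (simp add: card_image)
  moreover have "finite e" using \<open>card e = 2\<close> by (metis card.infinite zero_neq_numeral)
  moreover have "Inr f \<notin> (Inl ` e :: ('a + 'a set) set)" by auto
  ultimately show "card X = 3" unfolding X by (simp add: card_insert_disjoint)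
qed

lemma tri_inr: "X \<in> Tri F \<Longrightarrow> \<exists>g. Inr g \<in> X"
  unfolding Tri_def by blast

lemma tri_inr_uniq: "X \<in> Tri F \<Longrightarrow> Inr g \<in> X \<Longrightarrow> Inr g' \<in> X \<Longrightarrow> g = g'"
  unfolding Tri_def by blast

lemma tri_inl: "X \<in> Tri F \<Longrightarrow> Inr g \<in> X \<Longrightarrow> Inl a \<in> X \<Longrightarrow> g \<in> F \<and> a \<in> g"
  unfolding Tri_def by blast

lemma tri_mem: "f \<in> F \<Longrightarrow> a \<in> f \<Longrightarrow> b \<in> f \<Longrightarrow> a \<noteq> b \<Longrightarrow> {Inr f, Inl a, Inl b} \<in> Tri F"
proof -
  assume h: "f \<in> F" "a \<in> f" "b \<in> f" "a \<noteq> b"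
  have "{a, b} \<in> edges F" unfolding edges_def using h by auto
  then have "insert (Inr f) (Inl ` {a, b}) \<in> Tri F" unfolding Tri_def using h by blast
  then show ?thesis by simp
qed

lemma tri_c3: "\<forall>X\<in>Tri F. card X = 3" using tri_card by blast

definition fs :: "(int \<Rightarrow> 'a) \<Rightarrow> int \<Rightarrow> 'a set" where
  "fs s q = {s q, s (q+1), s (q+2)}"

definition ts :: "(int \<Rightarrow> 'a) \<Rightarrow> int \<Rightarrow> 'a + 'a set" where
  "ts s k = (if k mod 3 = 0 then Inl (s (k div 3 + 1)) else if k mod 3 = 1 then Inl (s (k div 3))
     else Inr (fs s (k div 3)))"

lemma ts0[simp]: "ts s (3*q) = Inl (s (q+1))" unfolding ts_def by simp
lemma ts1[simp]: "ts s (3*q+1) = Inl (s q)" unfolding ts_def by simp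
lemma ts2[simp]: "ts s (3*q+2) = Inr (fs s q)" unfolding ts_def by simp
lemma ts3[simp]: "ts s (3*q+3) = Inl (s (q+2))" unfolding ts_def by (simp add: ac_simps)
lemma ts4[simp]: "ts s (3*q+4) = Inl (s (q+1))" unfolding ts_def by (simp add: ac_simps)
lemma ts5[simp]: "ts s (3*q+5) = Inr (fs s (q+1))" unfolding ts_def by (simp add: ac_simps)

lemma ts1'[simp]: "ts s (1 + 3*q) = Inl (s q)" using ts1[of s q] by (simp add: add.commute)
lemma ts2'[simp]: "ts s (2 + 3*q) = Inr (fs s q)" using ts2[of s q] by (simp add: add.commute)
lemma ts3'[simp]: "ts s (3 + 3*q) = Inl (s (q+2))" using ts3[of s q] by (simp add: add.commute)
lemma ts4'[simp]: "ts s (4 + 3*q) = Inl (s (q+1))" using ts4[of s q] by (simp add: add.commute)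
lemma ts5'[simp]: "ts s (5 + 3*q) = Inr (fs s (q+1))" using ts5[of s q] by (simp add: add.commute)

lemma mod3_cases:
  assumes "\<And>q. P (3*q)" "\<And>q. P (3*q+1)" "\<And>q. P (3*q+2)"
  shows "P (k::int)"
proof -
  have k: "k = 3 * (k div 3) + k mod 3" by simp
  have "k mod 3 = 0 \<or> k mod 3 = 1 \<or> k mod 3 = 2" by auto
  then show ?thesis using assms k by (metis add.right_neutral)
qed

lemma ts_per: assumes "\<forall>i. s (i + n) = s i" shows "ts s (k + 3*n) = ts s k"
proof -
  have h: "\<And>j. s (j + n) = s j" using assms by blast
  have f: "\<And>j. fs s (j + n) = fs s j" unfolding fs_def
    by (metis h add.commute add.left_commute)
  have g: "\<And>j. s (j + n + 1) = s (j + 1)" by (metis h add.commute add.left_commute)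
  have "(k + 3*n) div 3 = k div 3 + n" "(k + 3*n) mod 3 = k mod 3" by simp_all
  moreover have "\<And>j. fs s (n + j) = fs s j" "\<And>j. s (n + j + 1) = s (j + 1)" "\<And>j. s (n + j) = s j"
    using f g h by (simp_all add: add.commute)
  ultimately show ?thesis unfolding ts_def by simp
qed

lemma ts_vzz:
  assumes v: "vzz F s"
  shows "vzz (Tri F) (ts s)"
proof -
  obtain n where n: "n > 0" "\<forall>i. s (i + n) = s i" using v unfolding vzz_def by blast
  have P: "\<And>i. {s i, s (i+1), s (i+2)} \<in> F \<and> s i \<noteq> s (i+1) \<and> s i \<noteq> s (i+2) \<and> s i \<noteq> s (i+3)"
    using v unfolding vzz_def by blast
  have D: "\<And>q. fs s q \<in> F" "\<And>q. s q \<noteq> s (q+1)" "\<And>q. s q \<noteq> s (q+2)" "\<And>q. s q \<noteq> s (q+3)"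
    "\<And>q. s (q+1) \<noteq> s (q+2)" "\<And>q. s (q+1) \<noteq> s (q+3)"
    using P unfolding fs_def apply blast+
    using P[of "q+1" for q] by (simp_all add: ac_simps)
  have M: "\<And>q. s q \<in> fs s q" "\<And>q. s (q+1) \<in> fs s q" "\<And>q. s (q+2) \<in> fs s q"
    unfolding fs_def by auto
  have fne: "\<And>q. fs s q \<noteq> fs s (q+1)"
  proof
    fix q assume "fs s q = fs s (q+1)"
    then have "s q \<in> fs s (q+1)" using M by metis
    then show False using D(2,3,4)[of q] unfolding fs_def by (auto simp: ac_simps)
  qed
  define R where "R = (\<lambda>k. {ts s k, ts s (k+1), ts s (k+2)} \<in> Tri F \<and> ts s k \<noteq> ts s (k+1) \<and>
      ts s k \<noteq> ts s (k+2) \<and> ts s k \<noteq> ts s (k+3))"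
  have Q: "\<And>k. R k"
  proof -
    fix k show "R k"
    proof (rule mod3_cases[of _ k])
      fix q
      have "{Inr (fs s q), Inl (s (q+1)), Inl (s q)} \<in> Tri F"
        using tri_mem[OF D(1) M(2) M(1)] D(2)[of q] by metis
      then show "R (3*q)" unfolding R_def using D D(2,3,4,5,6)[THEN not_sym] by (simp add: insert_commute)
    next
      fix q
      have "{Inr (fs s q), Inl (s q), Inl (s (q+2))} \<in> Tri F"
        using tri_mem[OF D(1) M(1) M(3)] D(3)[of q] by metis
      then show "R (3*q+1)" unfolding R_def using D D(2,3,4,5,6)[THEN not_sym] by (simp add: insert_commute)
    next
      fix q
      have "{Inr (fs s q), Inl (s (q+2)), Inl (s (q+1))} \<in> Tri F"
        using tri_mem[OF D(1) M(3) M(2)] D(5)[of q] by metis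
      then show "R (3*q+2)" unfolding R_def using D fne D(2,3,4,5,6)[THEN not_sym] by (simp add: insert_commute)
    qed
  qed
  have "\<forall>k. ts s (k + 3*n) = ts s k" using ts_per n by blast
  moreover have "(3::int) * n > 0" using n by simp
  ultimately show ?thesis unfolding vzz_def using Q n unfolding R_def
    by (metis add.commute)
qed


definition Lam :: "(int \<Rightarrow> 'a set) \<Rightarrow> int \<Rightarrow> ('a + 'a set) set" where
  "Lam z = edg (ts (vs z))"

lemma edg_ts0: "edg (ts s) (3*q) = Inl ` {s q, s (q+1)}" unfolding edg_def by auto
lemma edg_ts1: "edg (ts s) (3*q+1) = {Inr (fs s q), Inl (s q)}" unfolding edg_def
  by (simp add: insert_commute)
lemma edg_ts2: "edg (ts s) (3*q+2) = {Inr (fs s q), Inl (s (q+2))}" unfolding edg_def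
  by (simp add: insert_commute)

lemma interleave_ts:
  "interleave (edg s) (\<lambda>q. {Inr (fs s q), Inl (s q)}) (\<lambda>q. {Inr (fs s q), Inl (s (q+2))}) = edg (ts s)"
proof
  fix k show "interleave (edg s) (\<lambda>q. {Inr (fs s q), Inl (s q)}) (\<lambda>q. {Inr (fs s q), Inl (s (q+2))}) k = edg (ts s) k"
  proof (rule mod3_cases[of _ k])
    fix q show "interleave (edg s) (\<lambda>q. {Inr (fs s q), Inl (s q)}) (\<lambda>q. {Inr (fs s q), Inl (s (q+2))}) (3*q) = edg (ts s) (3*q)"
      unfolding interleave_def edg_ts0 by (simp add: edg_def)
  next
    fix q show "interleave (edg s) (\<lambda>q. {Inr (fs s q), Inl (s q)}) (\<lambda>q. {Inr (fs s q), Inl (s (q+2))}) (3*q+1) = edg (ts s) (3*q+1)"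
      unfolding interleave_def edg_ts1 by simp
  next
    fix q show "interleave (edg s) (\<lambda>q. {Inr (fs s q), Inl (s q)}) (\<lambda>q. {Inr (fs s q), Inl (s (q+2))}) (3*q+2) = edg (ts s) (3*q+2)"
      unfolding interleave_def edg_ts2 by simp
  qed
qed

lemma vzz_facts:
  assumes "vzz F s"
  shows "\<And>q. fs s q \<in> F" "\<And>q. s q \<noteq> s (q+1)" "\<And>q. s q \<noteq> s (q+2)" "\<And>q. s q \<noteq> s (q+3)"
    "\<And>q. s (q+1) \<noteq> s (q+2)" "\<And>q. s (q+1) \<noteq> s (q+3)"
proof -
  have P: "\<And>i. {s i, s (i+1), s (i+2)} \<in> F \<and> s i \<noteq> s (i+1) \<and> s i \<noteq> s (i+2) \<and> s i \<noteq> s (i+3)"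
    using assms unfolding vzz_def by blast
  show "\<And>q. fs s q \<in> F" "\<And>q. s q \<noteq> s (q+1)" "\<And>q. s q \<noteq> s (q+2)" "\<And>q. s q \<noteq> s (q+3)"
    using P unfolding fs_def by blast+
  show "\<And>q. s (q+1) \<noteq> s (q+2)" "\<And>q. s (q+1) \<noteq> s (q+3)"
    using P[of "q+1" for q] by (simp_all add: ac_simps)
qed

lemma face_fs:
  assumes c3: "\<forall>f\<in>F. card f = 3" and v: "vzz F s"
  shows "face_of F (edg s q) (edg s (q+1)) = fs s q"
proof -
  note D = vzz_facts[OF v]
  have u: "edg s q \<union> edg s (q+1) = fs s q" unfolding edg_def fs_def by (auto simp: ac_simps)
  have "card (fs s q) = 3" unfolding fs_def using D by auto
  then show ?thesis using face_of_eq[OF c3, of "edg s q" "edg s (q+1)"] u D(1) by simp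
qed

lemma Lam_fwd:
  assumes tri: "triangulation F" and zz: "zigzag F z"
  shows "zigzag (Tri F) (Lam z) \<and> interleaved F z (Lam z) \<and>
    (\<forall>i. zz_dir (Lam z) (3 * i) = (Inl (snd (zz_dir z i)), Inl (fst (zz_dir z i))))"
proof -
  have c3: "\<forall>f\<in>F. card f = 3" using tri unfolding triangulation_def by blast
  define s where "s = vs z"
  have v: "vzz F s" and ze: "z = edg s" using zigzag_vzz[OF c3 zz] unfolding s_def by auto
  have L: "Lam z = edg (ts s)" unfolding Lam_def s_def by simp
  have vt: "vzz (Tri F) (ts s)" using ts_vzz[OF v] .
  have A: "zigzag (Tri F) (Lam z)" unfolding L using vzz_zigzag[OF tri_c3 vt] .
  have B: "\<forall>i. zz_dir (Lam z) (3 * i) = (Inl (snd (zz_dir z i)), Inl (fst (zz_dir z i)))"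
  proof
    fix i
    have "zz_dir (Lam z) (3 * i) = (ts s (3*i), ts s (3*i+1))" unfolding L using vzz_dir[OF vt] .
    moreover have "zz_dir z i = (s i, s (i+1))" unfolding ze using vzz_dir[OF v] .
    ultimately show "zz_dir (Lam z) (3 * i) = (Inl (snd (zz_dir z i)), Inl (fst (zz_dir z i)))" by simp
  qed
  have ff: "\<And>i. face_of F (z i) (z (i + 1)) = fs s i" unfolding ze using face_fs[OF c3 v] .
  have "interleaved F z (Lam z)"
    unfolding interleaved_def
  proof (intro exI conjI)
    show "\<forall>i. \<exists>u\<in>face_of F (z i) (z (i + 1)). {Inr (fs s i), Inl (s i)} = {Inr (face_of F (z i) (z (i + 1))), Inl u}"
      unfolding ff fs_def by auto
    show "\<forall>i. \<exists>u\<in>face_of F (z i) (z (i + 1)). {Inr (fs s i), Inl (s (i+2))} = {Inr (face_of F (z i) (z (i + 1))), Inl u}"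
      unfolding ff fs_def by auto
    show "Lam z = interleave z (\<lambda>i. {Inr (fs s i), Inl (s i)}) (\<lambda>i. {Inr (fs s i), Inl (s (i+2))})"
      unfolding L using interleave_ts[of s] ze by simp
  qed
  then show ?thesis using A B by blast
qed


definition isr :: "'a + 'b \<Rightarrow> bool" where "isr x = (\<exists>g. x = Inr g)"

lemma two_inr: "X \<in> Tri F \<Longrightarrow> x \<in> X \<Longrightarrow> y \<in> X \<Longrightarrow> x \<noteq> y \<Longrightarrow> isr x \<Longrightarrow> isr y \<Longrightarrow> False"
proof -
  assume h: "X \<in> Tri F" "x \<in> X" "y \<in> X" "x \<noteq> y" "isr x" "isr y"
  obtain g g' where "x = Inr g" "y = Inr g'" using h unfolding isr_def by blast
  then show False using tri_inr_uniq[OF h(1), of g g'] h by simp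
qed

lemma one_inr:
  assumes h: "{x, y, u} \<in> Tri F" and d: "x \<noteq> y" "x \<noteq> u" "y \<noteq> u"
  shows "(isr x \<longrightarrow> \<not> isr y \<and> \<not> isr u) \<and> (isr y \<longrightarrow> \<not> isr x \<and> \<not> isr u) \<and>
    (isr u \<longrightarrow> \<not> isr x \<and> \<not> isr y) \<and> (isr x \<or> isr y \<or> isr u)"
proof -
  obtain g where g: "Inr g \<in> {x, y, u}" using tri_inr[OF h] by blast
  have E: "isr x \<or> isr y \<or> isr u" using g unfolding isr_def by blast
  have "\<not> (isr x \<and> isr y)" using two_inr[OF h, of x y] d by blast
  moreover have "\<not> (isr x \<and> isr u)" using two_inr[OF h, of x u] d by blast
  moreover have "\<not> (isr y \<and> isr u)" using two_inr[OF h, of y u] d by blast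
  ultimately show ?thesis using E by blast
qed

lemma shift_vzz: "vzz G t \<Longrightarrow> vzz G (shift c t)"
proof -
  assume v: "vzz G t"
  obtain n where n: "n > 0" "\<forall>i. t (i + n) = t i" using v unfolding vzz_def by blast
  have P: "\<And>i. {t i, t (i+1), t (i+2)} \<in> G \<and> t i \<noteq> t (i+1) \<and> t i \<noteq> t (i+2) \<and> t i \<noteq> t (i+3)"
    using v unfolding vzz_def by blast
  have "\<forall>i. shift c t (i + n) = shift c t i" unfolding shift_def using n
    by (metis add.commute add.left_commute)
  moreover have "\<forall>i. {shift c t i, shift c t (i+1), shift c t (i+2)} \<in> G \<and> shift c t i \<noteq> shift c t (i+1) \<and>
      shift c t i \<noteq> shift c t (i+2) \<and> shift c t i \<noteq> shift c t (i+3)"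
    unfolding shift_def using P by (metis add.commute add.left_commute)
  ultimately show ?thesis unfolding vzz_def using n by blast
qed

lemma edg_shift: "edg (shift c t) = shift c (edg t)"
  unfolding edg_def shift_def by (auto simp: ac_simps)

lemma P4':
  assumes tri: "triangulation F" and v: "vzz (Tri F) t" and R: "\<forall>i. isr (t (3*i+2))"
  shows "\<exists>s. vzz F s \<and> t = ts s"
proof -
  have c3: "\<forall>f\<in>F. card f = 3" using tri unfolding triangulation_def by blast
  obtain n where n: "n > 0" "\<forall>i. t (i + n) = t i" using v unfolding vzz_def by blast
  have VT: "\<And>k. {t k, t (k+1), t (k+2)} \<in> Tri F \<and> t k \<noteq> t (k+1) \<and> t k \<noteq> t (k+2) \<and> t k \<noteq> t (k+3)"
    using v unfolding vzz_def by blast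
  have N: "\<And>i. \<not> isr (t (3*i)) \<and> \<not> isr (t (3*i+1))"
  proof -
    fix i
    have "t (3*i+1) \<noteq> t (3*i+2)" using VT[of "3*i+1"] by (simp add: ac_simps)
    then show "\<not> isr (t (3*i)) \<and> \<not> isr (t (3*i+1))"
      using one_inr[of "t (3*i)" "t (3*i+1)" "t (3*i+2)" F] VT[of "3*i"] R by (simp add: ac_simps)
  qed
  define a where "a i = projl (t (3*i))" for i
  define b where "b i = projl (t (3*i+1))" for i
  define g where "g i = projr (t (3*i+2))" for i
  have ta: "\<And>i. t (3*i) = Inl (a i)" unfolding a_def using N
    by (case_tac "t (3*i)") (auto simp: isr_def)
  have tb: "\<And>i. t (3*i+1) = Inl (b i)" unfolding b_def using N
    by (case_tac "t (3*i+1)") (auto simp: isr_def)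
  have tg: "t (3*i+2) = Inr (g i)" for i
  proof -
    obtain h where "t (3*i+2) = Inr h" using R unfolding isr_def by blast
    then show ?thesis by (simp add: g_def)
  qed
  have ix: "\<And>i::int. 3*i+3 = 3*(i+1)" "\<And>i::int. 3*i+4 = 3*(i+1)+1" "\<And>i::int. 3*i+5 = 3*(i+1)+2"
    by simp_all
  define KP where "KP i \<longleftrightarrow> (g i \<in> F \<and> g i = {a i, b i, a (i+1)} \<and> b (i+1) = a i \<and> a i \<noteq> b i \<and> b i \<noteq> a (i+1)
     \<and> a i \<noteq> a (i+1) \<and> b i \<noteq> b (i+1) \<and> g i \<noteq> g (i+1) \<and> a (i+1) \<noteq> b (i+1))" for i
  have KEY0: "KP i" for i
  proof -
    have T0: "{Inl (a i), Inl (b i), Inr (g i)} \<in> Tri F" "a i \<noteq> b i"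
      using VT[of "3*i"] ta tb tg by (simp_all add: ac_simps)
    have T1: "{Inl (b i), Inr (g i), Inl (a (i+1))} \<in> Tri F" "b i \<noteq> a (i+1)"
      using VT[of "3*i+1"] ta[of "i+1"] tb tg ix by (simp_all add: ac_simps)
    have T2: "{Inr (g i), Inl (a (i+1)), Inl (b (i+1))} \<in> Tri F" "g i \<noteq> g (i+1)"
      using VT[of "3*i+2"] ta[of "i+1"] tb[of "i+1"] tg tg[of "i+1"] ix by (simp_all add: ac_simps)
    have D: "a i \<noteq> a (i+1)" "b i \<noteq> b (i+1)"
      using VT[of "3*i"] VT[of "3*i+1"] ta ta[of "i+1"] tb tb[of "i+1"] ix by (simp_all add: ac_simps)
    have D2: "a (i+1) \<noteq> b (i+1)"
      using VT[of "3*(i+1)"] ta[of "i+1"] tb[of "i+1"] by (simp add: ac_simps)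
    have G: "g i \<in> F" "a i \<in> g i" "b i \<in> g i" "a (i+1) \<in> g i" "b (i+1) \<in> g i"
      using tri_inl[OF T0(1)] tri_inl[OF T1(1)] tri_inl[OF T2(1)] by auto
    have "card (g i) = 3" using c3 G by auto
    then have fin: "finite (g i)" by (metis card.infinite zero_neq_numeral)
    have "{a i, b i, a (i+1)} \<subseteq> g i" using G by auto
    moreover have "card {a i, b i, a (i+1)} = 3" using T0(2) T1(2) D by auto
    ultimately have geq: "g i = {a i, b i, a (i+1)}" using card_subset_eq[OF fin] \<open>card (g i) = 3\<close> by metis
    then have "b (i+1) = a i" using G(5) D D2 by auto
    then show "KP i" unfolding KP_def using geq G T0(2) T1(2) T2(2) D D2 by blast
  qed
  have KEY: "\<And>i. g i \<in> F \<and> g i = {a i, b i, a (i+1)} \<and> b (i+1) = a i \<and> a i \<noteq> b i \<and> b i \<noteq> a (i+1)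
     \<and> a i \<noteq> a (i+1) \<and> b i \<noteq> b (i+1) \<and> g i \<noteq> g (i+1) \<and> a (i+1) \<noteq> b (i+1)"
    using KEY0 unfolding KP_def by blast
  have ts_eq: "t = ts b"
  proof
    fix k show "t k = ts b k"
    proof (rule mod3_cases[of _ k])
      fix q show "t (3*q) = ts b (3*q)" using ta KEY[of q] by simp
    next
      fix q show "t (3*q+1) = ts b (3*q+1)" using tb by simp
    next
      fix q
      have e1: "b (q+1) = a q" using KEY[of q] by blast
      have e2: "b (q+2) = a (q+1)" using KEY[of "q+1"] by (simp add: add.commute)
      have "g q = fs b q" unfolding fs_def e1 e2 using KEY[of q] by auto
      then show "t (3*q+2) = ts b (3*q+2)" using tg[of q] by simp
    qed
  qed
  have t3: "\<forall>k. t (k + 3*n) = t k"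
  proof
    fix k
    have e: "k + 3*n = ((k + n) + n) + n" by simp
    have "t (((k + n) + n) + n) = t k" using n(2) by metis
    then show "t (k + 3*n) = t k" unfolding e .
  qed
  have per: "\<forall>i. b (i + n) = b i"
  proof
    fix i have "3*(i+n)+1 = (3*i+1) + 3*n" by simp
    then show "b (i + n) = b i" unfolding b_def using t3 by metis
  qed
  have "\<forall>i. {b i, b (i+1), b (i+2)} \<in> F \<and> b i \<noteq> b (i+1) \<and> b i \<noteq> b (i+2) \<and> b i \<noteq> b (i+3)"
  proof
    fix i
    have K0: "g i \<in> F" "g i = {a i, b i, a (i+1)}" "b (i+1) = a i" "a i \<noteq> b i" "b i \<noteq> a (i+1)"
      "g i \<noteq> g (i+1)" using KEY[of i] by blast+
    have K1: "g (i+1) = {a (i+1), b (i+1), a (i+1+1)}" "b (i+1+1) = a (i+1)" using KEY[of "i+1"] by blast+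
    have K2: "b (i+2+1) = a (i+2)" using KEY[of "i+2"] by blast
    have ee: "i+1+1 = i+2" "i+2+1 = i+3" by simp_all
    have k0: "b (i+1) = a i" "b (i+2) = a (i+1)" "b (i+3) = a (i+2)" using K0 K1 K2 unfolding ee by auto
    have gi: "{b i, b (i+1), b (i+2)} = g i" unfolding k0 K0(2) by blast
    have gi1: "g (i+1) = {b (i+1), b (i+2), b (i+3)}" unfolding K1(1) ee k0 by blast
    have "b i \<noteq> b (i+3)"
    proof
      assume "b i = b (i+3)"
      then have "g (i+1) = g i" unfolding gi1 gi[symmetric] by auto
      then show False using K0(6) by simp
    qed
    then show "{b i, b (i+1), b (i+2)} \<in> F \<and> b i \<noteq> b (i+1) \<and> b i \<noteq> b (i+2) \<and> b i \<noteq> b (i+3)"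
      using gi K0 k0 by auto
  qed
  then have "vzz F b" unfolding vzz_def using per n by blast
  then show ?thesis using ts_eq by blast
qed


lemma P4:
  assumes tri: "triangulation F" and v: "vzz (Tri F) t"
  shows "\<exists>c s. vzz F s \<and> shift c t = ts s"
proof -
  have VT: "\<And>k. {t k, t (k+1), t (k+2)} \<in> Tri F \<and> t k \<noteq> t (k+1) \<and> t k \<noteq> t (k+2) \<and> t k \<noteq> t (k+3)"
    using v unfolding vzz_def by blast
  have ONE: "(isr (t k) \<longrightarrow> \<not> isr (t (k+1)) \<and> \<not> isr (t (k+2))) \<and>
     (isr (t (k+2)) \<longrightarrow> \<not> isr (t k) \<and> \<not> isr (t (k+1))) \<and>
     (isr (t k) \<or> isr (t (k+1)) \<or> isr (t (k+2)))" for k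
  proof -
    have "t (k+1) \<noteq> t (k+1+1)" using VT[of "k+1"] by blast
    then have "t (k+1) \<noteq> t (k+2)" by (simp add: add.assoc)
    then show ?thesis using one_inr[of "t k" "t (k+1)" "t (k+2)" F] VT[of k] by blast
  qed
  obtain r where r: "isr (t r)" using ONE[of 0] by auto
  have ALL: "isr (t (3*i + r))" for i
  proof (induct i rule: int_induct[where k=0])
    case base then show ?case using r by simp
  next
    case (step1 i)
    define k where "k = 3*i + r"
    have a: "\<not> isr (t (k+1))" "\<not> isr (t (k+2))" using ONE[of k] step1(2) k_def by blast+
    have ee: "k+1+1 = k+2" "k+1+2 = 3*(i+1) + r" unfolding k_def by simp_all
    have "isr (t (k+1+2))" using ONE[of "k+1"] a unfolding ee(1) by blast
    then show ?case unfolding ee(2) .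
  next
    case (step2 i)
    define j where "j = 3*(i - 1) + r"
    have ee: "j+1+2 = 3*i + r" "j+1+1 = j+2" unfolding j_def by simp_all
    have a: "\<not> isr (t (j+1))" "\<not> isr (t (j+2))" using ONE[of "j+1"] step2(2) unfolding ee by blast+
    show ?case using ONE[of j] a unfolding j_def by blast
  qed
  have "\<forall>i. isr (shift (r - 2) t (3*i+2))"
  proof
    fix i have "3*i+2 + (r - 2) = 3*i + r" by simp
    then show "isr (shift (r - 2) t (3*i+2))" unfolding shift_def using ALL by simp
  qed
  then obtain s where "vzz F s \<and> shift (r - 2) t = ts s" using P4'[OF tri shift_vzz[OF v]] by blast
  then show ?thesis by blast
qed

lemma vs_edg: "vzz G s \<Longrightarrow> vs (edg s) = s"
proof
  fix i assume "vzz G s"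
  then have "zz_dir (edg s) i = (s i, s (i+1))" by (rule vzz_dir)
  then show "vs (edg s) i = s i" unfolding vs_def zz_dir_def by simp
qed

lemma Lam_edg: "vzz F s \<Longrightarrow> Lam (edg s) = edg (ts s)"
  unfolding Lam_def using vs_edg by metis

lemma shift_shift: "shift a (shift b z) = shift (a + b) z"
  unfolding shift_def by (simp add: ac_simps)

lemma cyc_shift: "cyc_class z = range (\<lambda>k. shift k z)"
  unfolding cyc_class_def shift_def by simp

lemma cyc_mem: "x \<in> cyc_class y \<longleftrightarrow> (\<exists>k. x = shift k y)"
  unfolding cyc_shift by auto

lemma cyc_self: "x \<in> cyc_class x"
  unfolding cyc_mem by (rule exI[of _ 0]) (simp add: shift_def)

lemma cyc_eq: "x \<in> cyc_class y \<Longrightarrow> cyc_class x = cyc_class y"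
proof -
  assume "x \<in> cyc_class y"
  then obtain k where k: "x = shift k y" unfolding cyc_mem by blast
  show ?thesis
  proof
    show "cyc_class x \<subseteq> cyc_class y"
    proof
      fix u assume "u \<in> cyc_class x"
      then obtain m where "u = shift m x" unfolding cyc_mem by blast
      then have "u = shift (m + k) y" unfolding k shift_shift by simp
      then show "u \<in> cyc_class y" unfolding cyc_mem by blast
    qed
    show "cyc_class y \<subseteq> cyc_class x"
    proof
      fix u assume "u \<in> cyc_class y"
      then obtain m where "u = shift m y" unfolding cyc_mem by blast
      then have "u = shift (m - k) x" unfolding k shift_shift by simp
      then show "u \<in> cyc_class x" unfolding cyc_mem by blast
    qed
  qed
qed

lemma rev_shift: "rev_seq (shift k z) = shift (-k) (rev_seq z)"
  unfolding rev_seq_def shift_def by (simp add: algebra_simps)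

lemma rev_cyc: "rev_zz (cyc_class z) = cyc_class (rev_seq z)"
proof
  show "rev_zz (cyc_class z) \<subseteq> cyc_class (rev_seq z)"
  proof
    fix u assume "u \<in> rev_zz (cyc_class z)"
    then obtain v where v: "v \<in> cyc_class z" "u = rev_seq v" unfolding rev_zz_def by blast
    then obtain k where "v = shift k z" unfolding cyc_mem by blast
    then have "u = shift (-k) (rev_seq z)" using v rev_shift by simp
    then show "u \<in> cyc_class (rev_seq z)" unfolding cyc_mem by blast
  qed
  show "cyc_class (rev_seq z) \<subseteq> rev_zz (cyc_class z)"
  proof
    fix u assume "u \<in> cyc_class (rev_seq z)"
    then obtain k where "u = shift k (rev_seq z)" unfolding cyc_mem by blast
    then have "u = rev_seq (shift (-k) z)" using rev_shift[of "-k" z] by simp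
    moreover have "shift (-k) z \<in> cyc_class z" unfolding cyc_mem by blast
    ultimately show "u \<in> rev_zz (cyc_class z)" unfolding rev_zz_def by blast
  qed
qed

lemma rev_rev_seq[simp]: "rev_seq (rev_seq z) = z"
  unfolding rev_seq_def by simp

lemma rev_rev_zz[simp]: "rev_zz (rev_zz Z) = Z"
  unfolding rev_zz_def by (simp add: image_image)

lemma shift_zigzag:
  assumes c3: "\<forall>f\<in>G. card f = 3" and zz: "zigzag G z"
  shows "zigzag G (shift k z)"
proof -
  obtain s where "vzz G s" "z = edg s" using zigzag_vzz[OF c3 zz] by blast
  then show ?thesis using vzz_zigzag[OF c3 shift_vzz] edg_shift by metis
qed

lemma rev_vzz:
  assumes v: "vzz G s"
  shows "vzz G (\<lambda>i. s (1 - i))"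
proof -
  obtain n where n: "n > 0" "\<forall>i. s (i + n) = s i" using v unfolding vzz_def by blast
  have P: "\<And>i. {s i, s (i+1), s (i+2)} \<in> G \<and> s i \<noteq> s (i+1) \<and> s i \<noteq> s (i+2) \<and> s i \<noteq> s (i+3)"
    using v unfolding vzz_def by blast
  have per: "\<forall>i. s (1 - (i + n)) = s (1 - i)"
  proof
    fix i have "s ((1 - (i + n)) + n) = s (1 - (i + n))" using n by blast
    then show "s (1 - (i + n)) = s (1 - i)" by simp
  qed
  have "\<forall>i. {s (1 - i), s (1 - (i+1)), s (1 - (i+2))} \<in> G \<and> s (1 - i) \<noteq> s (1 - (i+1)) \<and>
     s (1 - i) \<noteq> s (1 - (i+2)) \<and> s (1 - i) \<noteq> s (1 - (i+3))"
  proof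
    fix i
    have A: "{s (-i-1), s (-i-1+1), s (-i-1+2)} \<in> G" using P by blast
    have B: "s (-i) \<noteq> s (-i+1)" "s (-i-1) \<noteq> s (-i-1+2)" "s (-i-2) \<noteq> s (-i-2+3)" using P by blast+
    have ee: "-i-1+1 = -i" "-i-1+2 = 1 - i" "1 - (i+1) = -i" "1 - (i+2) = -i-1" "1 - (i+3) = -i-2"
      "-i+1 = 1 - i" "-i-2+3 = 1 - i" by simp_all
    show "{s (1 - i), s (1 - (i+1)), s (1 - (i+2))} \<in> G \<and> s (1 - i) \<noteq> s (1 - (i+1)) \<and>
     s (1 - i) \<noteq> s (1 - (i+2)) \<and> s (1 - i) \<noteq> s (1 - (i+3))"
      using A B unfolding ee by (auto simp: insert_commute)
  qed
  then show ?thesis unfolding vzz_def using per n by blast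
qed

lemma rev_zigzag:
  assumes c3: "\<forall>f\<in>G. card f = 3" and zz: "zigzag G z"
  shows "zigzag G (rev_seq z)"
proof -
  obtain s where v: "vzz G s" and ze: "z = edg s" using zigzag_vzz[OF c3 zz] by blast
  have "rev_seq z = edg (\<lambda>i. s (1 - i))"
  proof
    fix i show "rev_seq z i = edg (\<lambda>i. s (1 - i)) i"
      unfolding ze rev_seq_def edg_def by (simp add: insert_commute)
  qed
  then show ?thesis using vzz_zigzag[OF c3 rev_vzz[OF v]] by simp
qed

lemma zigzags_E: "Z \<in> zigzags G \<Longrightarrow> \<exists>z. Z = cyc_class z \<and> zigzag G z"
  unfolding zigzags_def by simp

lemma zigzags_I: "zigzag G z \<Longrightarrow> cyc_class z \<in> zigzags G"
  unfolding zigzags_def by blast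

lemma zigzags_rev: "\<forall>f\<in>G. card f = 3 \<Longrightarrow> Z \<in> zigzags G \<Longrightarrow> rev_zz Z \<in> zigzags G"
proof -
  assume c3: "\<forall>f\<in>G. card f = 3" and "Z \<in> zigzags G"
  then obtain z where z: "Z = cyc_class z" "zigzag G z" using zigzags_E by blast
  have "rev_zz Z = cyc_class (rev_seq z)" unfolding z rev_cyc ..
  then show ?thesis using zigzags_I[OF rev_zigzag[OF c3 z(2)]] by simp
qed

lemma zigzags_mem: "\<forall>f\<in>G. card f = 3 \<Longrightarrow> Z \<in> zigzags G \<Longrightarrow> w \<in> Z \<Longrightarrow> zigzag G w"
proof -
  assume c3: "\<forall>f\<in>G. card f = 3" and "Z \<in> zigzags G" "w \<in> Z"
  then obtain z where z: "Z = cyc_class z" "zigzag G z" using zigzags_E by blast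
  then obtain k where "w = shift k z" using \<open>w \<in> Z\<close> cyc_mem by blast
  then show ?thesis using shift_zigzag[OF c3 z(2)] by simp
qed





lemma il0: "interleave z e1 e2 (3*q) = Inl ` z q" unfolding interleave_def by simp
lemma il1: "interleave z e1 e2 (3*q+1) = e1 q" unfolding interleave_def by simp
lemma il2: "interleave z e1 e2 (3*q+2) = e2 q" unfolding interleave_def by simp
lemma il3: "interleave z e1 e2 (3*q+3) = Inl ` z (q+1)" unfolding interleave_def by simp

lemma P5:
  assumes tri: "triangulation F" and zz: "zigzag F z" and zw: "zigzag (Tri F) w"
    and il: "interleaved F z w"
  shows "w = Lam z"
proof -
  have c3: "\<forall>f\<in>F. card f = 3" using tri unfolding triangulation_def by blast
  define s where "s = vs z"
  have v: "vzz F s" and ze: "z = edg s" using zigzag_vzz[OF c3 zz] unfolding s_def by auto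
  have L: "Lam z = edg (ts s)" unfolding Lam_def s_def by simp
  obtain e1 e2 where E1: "\<forall>i. \<exists>u\<in>face_of F (z i) (z (i + 1)). e1 i = {Inr (face_of F (z i) (z (i + 1))), Inl u}"
    and E2: "\<forall>i. \<exists>u\<in>face_of F (z i) (z (i + 1)). e2 i = {Inr (face_of F (z i) (z (i + 1))), Inl u}"
    and W: "w = interleave z e1 e2" using il unfolding interleaved_def by blast
  have ff: "\<And>i. face_of F (z i) (z (i + 1)) = fs s i" unfolding ze using face_fs[OF c3 v] .
  have D: "\<And>i. w i \<inter> w (i + 2) = {}" using zw unfolding zigzag_def by blast
  note VD = vzz_facts[OF v]
  have zi: "\<And>i. z (i+1) = {s (i+1), s (i+2)}" unfolding ze edg_def by (simp add: add.assoc)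
  have e1eq: "e1 i = {Inr (fs s i), Inl (s i)}" for i
  proof -
    obtain u where u: "u \<in> fs s i" "e1 i = {Inr (fs s i), Inl u}" using E1 ff by metis
    have "w (3*i+1) \<inter> w (3*i+3) = {}" using D[of "3*i+1"] by (simp add: add.assoc)
    then have "e1 i \<inter> Inl ` z (i+1) = {}" unfolding W il1 il3 .
    then have "u \<noteq> s (i+1) \<and> u \<noteq> s (i+2)" unfolding u(2) zi by auto
    then have "u = s i" using u(1) unfolding fs_def by auto
    then show ?thesis using u(2) by simp
  qed
  have e2eq: "e2 i = {Inr (fs s i), Inl (s (i+2))}" for i
  proof -
    obtain u where u: "u \<in> fs s i" "e2 i = {Inr (fs s i), Inl u}" using E2 ff by metis
    have "w (3*i) \<inter> w (3*i+2) = {}" using D[of "3*i"] by simp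
    then have "Inl ` z i \<inter> e2 i = {}" unfolding W il0 il2 .
    then have "u \<noteq> s i \<and> u \<noteq> s (i+1)" unfolding u(2) ze edg_def by auto
    then have "u = s (i+2)" using u(1) unfolding fs_def by auto
    then show ?thesis using u(2) by simp
  qed
  have "e1 = (\<lambda>q. {Inr (fs s q), Inl (s q)})" using e1eq by (rule ext)
  moreover have "e2 = (\<lambda>q. {Inr (fs s q), Inl (s (q+2))})" using e2eq by (rule ext)
  ultimately have "w = interleave z (\<lambda>q. {Inr (fs s q), Inl (s q)}) (\<lambda>q. {Inr (fs s q), Inl (s (q+2))})"
    unfolding W by simp
  then show ?thesis unfolding L using interleave_ts[of s] ze by simp
qed

lemma vs_shift: "vs (shift k z) = shift k (vs z)"
  unfolding vs_def shift_def by (simp add: algebra_simps)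

lemma ts_shift: "ts (shift k s) = shift (3*k) (ts s)"
proof
  fix j
  have "(j + 3*k) div 3 = j div 3 + k" "(j + 3*k) mod 3 = j mod 3" by simp_all
  then show "ts (shift k s) j = shift (3*k) (ts s) j"
    unfolding ts_def shift_def fs_def by (simp add: ac_simps)
qed

lemma Lam_shift: "Lam (shift k z) = shift (3*k) (Lam z)"
  unfolding Lam_def vs_shift ts_shift edg_shift ..

lemma Lam_Inl:
  assumes c3: "\<forall>f\<in>F. card f = 3" and zz: "zigzag F z"
  shows "Lam z (3*i) = Inl ` z i"
proof -
  obtain v: "vzz F (vs z)" and ze: "z = edg (vs z)" using zigzag_vzz[OF c3 zz] by blast
  have "Lam z (3*i) = Inl ` {vs z i, vs z (i+1)}" unfolding Lam_def edg_ts0 ..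
  also have "\<dots> = Inl ` z i" by (subst ze) (simp add: edg_def)
  finally show ?thesis .
qed

lemma Lam_Inr:
  assumes "k mod 3 \<noteq> 0"
  shows "\<exists>g. Inr g \<in> Lam z k"
proof -
  have k: "k = 3 * (k div 3) + k mod 3" by simp
  have "k mod 3 = 1 \<or> k mod 3 = 2" using assms by auto
  then show ?thesis
  proof
    assume "k mod 3 = 1"
    then have "k = 3 * (k div 3) + 1" using k by simp
    then show ?thesis unfolding Lam_def by (metis edg_ts1 insertI1)
  next
    assume "k mod 3 = 2"
    then have "k = 3 * (k div 3) + 2" using k by simp
    then show ?thesis unfolding Lam_def by (metis edg_ts2 insertI1)
  qed
qed

lemma Lam_inj:
  assumes c3: "\<forall>f\<in>F. card f = 3" and z0: "zigzag F z0" and z1: "zigzag F z1"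
    and m: "Lam z1 \<in> cyc_class (Lam z0)"
  shows "z1 \<in> cyc_class z0"
proof -
  obtain c where c: "Lam z1 = shift c (Lam z0)" using m unfolding cyc_mem by blast
  have "Lam z1 (3*0) = Lam z0 c" unfolding c shift_def by simp
  then have l: "Lam z0 c = Inl ` z1 0" using Lam_Inl[OF c3 z1, of 0] by simp
  have "c mod 3 = 0"
  proof (rule ccontr)
    assume "c mod 3 \<noteq> 0"
    then obtain g where "Inr g \<in> Lam z0 c" using Lam_Inr by blast
    then show False unfolding l by auto
  qed
  then have cd: "c = 3 * (c div 3)" by auto
  have "z1 i = z0 (i + c div 3)" for i
  proof -
    have "Lam z1 (3*i) = Lam z0 (3*(i + c div 3))" unfolding c shift_def by (subst cd) (simp add: algebra_simps)
    then have "Inl ` z1 i = (Inl ` z0 (i + c div 3) :: ('a + 'a set) set)"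
      unfolding Lam_Inl[OF c3 z1] Lam_Inl[OF c3 z0] .
    then show ?thesis by (simp add: inj_image_eq_iff)
  qed
  then have "z1 = shift (c div 3) z0" unfolding shift_def by auto
  then show ?thesis unfolding cyc_mem by blast
qed

definition Rel :: "'a set set \<Rightarrow> (int \<Rightarrow> 'a set) set \<Rightarrow> (int \<Rightarrow> ('a + 'a set) set) set \<Rightarrow> bool" where
  "Rel F Z W \<longleftrightarrow> (\<exists>z\<in>Z. \<exists>w\<in>W. interleaved F z w)"

lemma R1:
  assumes tri: "triangulation F" and z0: "zigzag F z0" and W: "W \<in> zigzags (Tri F)"
  shows "Rel F (cyc_class z0) W \<longleftrightarrow> W = cyc_class (Lam z0)"
proof
  have c3: "\<forall>f\<in>F. card f = 3" using tri unfolding triangulation_def by blast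
  assume "Rel F (cyc_class z0) W"
  then obtain z w where zw: "z \<in> cyc_class z0" "w \<in> W" "interleaved F z w" unfolding Rel_def by blast
  obtain k where k: "z = shift k z0" using zw(1) cyc_mem by blast
  have zz: "zigzag F z" unfolding k using shift_zigzag[OF c3 z0] .
  have wz: "zigzag (Tri F) w" using zigzags_mem[OF tri_c3 W zw(2)] .
  have "w = Lam z" using P5[OF tri zz wz zw(3)] .
  then have w: "w = shift (3*k) (Lam z0)" unfolding k Lam_shift .
  obtain w0 where w0: "W = cyc_class w0" using zigzags_E[OF W] by blast
  have "cyc_class w = W" unfolding w0 using cyc_eq zw(2) w0 by blast
  moreover have "cyc_class w = cyc_class (Lam z0)" using cyc_eq[of w "Lam z0"] unfolding w cyc_mem by blast
  ultimately show "W = cyc_class (Lam z0)" by simp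
next
  assume W: "W = cyc_class (Lam z0)"
  have "interleaved F z0 (Lam z0)" using Lam_fwd[OF tri z0] by blast
  moreover have "z0 \<in> cyc_class z0" "Lam z0 \<in> W" using cyc_self W by auto
  ultimately show "Rel F (cyc_class z0) W" unfolding Rel_def by blast
qed

lemma il_neg: "interleave z e1 e2 (- k) = interleave (rev_seq z) (\<lambda>i. e2 (-i-1)) (\<lambda>i. e1 (-i-1)) k"
proof (rule mod3_cases[of _ k])
  fix q show "interleave z e1 e2 (- (3*q)) = interleave (rev_seq z) (\<lambda>i. e2 (-i-1)) (\<lambda>i. e1 (-i-1)) (3*q)"
  proof -
    have "- (3*q) = 3 * (-q)" by simp
    then show ?thesis unfolding il0 by (simp only: il0 rev_seq_def)
  qed
next
  fix q :: int have "- (3*q+1) = 3*(-q-1) + 2" by simp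
  then show "interleave z e1 e2 (- (3*q+1)) = interleave (rev_seq z) (\<lambda>i. e2 (-i-1)) (\<lambda>i. e1 (-i-1)) (3*q+1)"
    unfolding il1 by (simp only: il2)
next
  fix q :: int have "- (3*q+2) = 3*(-q-1) + 1" by simp
  then show "interleave z e1 e2 (- (3*q+2)) = interleave (rev_seq z) (\<lambda>i. e2 (-i-1)) (\<lambda>i. e1 (-i-1)) (3*q+2)"
    unfolding il2 by (simp only: il1)
qed

lemma il_rev: "interleaved F z w \<Longrightarrow> interleaved F (rev_seq z) (rev_seq w)"
proof -
  assume "interleaved F z w"
  then obtain e1 e2 where E1: "\<forall>i. \<exists>u\<in>face_of F (z i) (z (i + 1)). e1 i = {Inr (face_of F (z i) (z (i + 1))), Inl u}"
    and E2: "\<forall>i. \<exists>u\<in>face_of F (z i) (z (i + 1)). e2 i = {Inr (face_of F (z i) (z (i + 1))), Inl u}"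
    and W: "w = interleave z e1 e2" unfolding interleaved_def by blast
  have fe: "face_of F (rev_seq z i) (rev_seq z (i + 1)) = face_of F (z (-i-1)) (z (-i-1 + 1))" for i
  proof -
    have e: "-(i+1) = -i-1" "-i-1+1 = -i" by simp_all
    show ?thesis unfolding rev_seq_def e by (rule face_of_sym)
  qed
  show ?thesis unfolding interleaved_def
  proof (intro exI conjI)
    show "\<forall>i. \<exists>u\<in>face_of F (rev_seq z i) (rev_seq z (i + 1)). e2 (-i-1) = {Inr (face_of F (rev_seq z i) (rev_seq z (i + 1))), Inl u}"
      unfolding fe using E2 by blast
    show "\<forall>i. \<exists>u\<in>face_of F (rev_seq z i) (rev_seq z (i + 1)). e1 (-i-1) = {Inr (face_of F (rev_seq z i) (rev_seq z (i + 1))), Inl u}"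
      unfolding fe using E1 by blast
    show "rev_seq w = interleave (rev_seq z) (\<lambda>i. e2 (-i-1)) (\<lambda>i. e1 (-i-1))"
    proof
      fix k show "rev_seq w k = interleave (rev_seq z) (\<lambda>i. e2 (-i-1)) (\<lambda>i. e1 (-i-1)) k"
        unfolding W rev_seq_def[of "interleave z e1 e2"] by (rule il_neg)
    qed
  qed
qed

lemma Rel_rev: "Rel F Z W \<Longrightarrow> Rel F (rev_zz Z) (rev_zz W)"
proof -
  assume "Rel F Z W"
  then obtain z w where zw: "z \<in> Z" "w \<in> W" "interleaved F z w" unfolding Rel_def by blast
  have "rev_seq z \<in> rev_zz Z" "rev_seq w \<in> rev_zz W" unfolding rev_zz_def using zw by auto
  then show ?thesis unfolding Rel_def using il_rev[OF zw(3)] by blast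
qed



context
  fixes R :: "(int \<Rightarrow> 'b) set \<Rightarrow> (int \<Rightarrow> 'c) set \<Rightarrow> bool"
    and ZF :: "(int \<Rightarrow> 'b) set set" and ZT :: "(int \<Rightarrow> 'c) set set"
  assumes a1: "\<And>Z. Z \<in> ZF \<Longrightarrow> rev_zz Z \<in> ZF" and a2: "\<And>W. W \<in> ZT \<Longrightarrow> rev_zz W \<in> ZT"
    and hb: "\<And>W. W \<in> ZT \<Longrightarrow> \<exists>Z\<in>ZF. R Z W"
    and hc: "\<And>Z. Z \<in> ZF \<Longrightarrow> \<exists>W\<in>ZT. R Z W"
    and hd: "\<And>Z W W'. Z \<in> ZF \<Longrightarrow> W \<in> ZT \<Longrightarrow> W' \<in> ZT \<Longrightarrow> R Z W \<Longrightarrow> R Z W' \<Longrightarrow> W = W'"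
    and he: "\<And>Z Z' W. Z \<in> ZF \<Longrightarrow> Z' \<in> ZF \<Longrightarrow> W \<in> ZT \<Longrightarrow> R Z W \<Longrightarrow> R Z' W \<Longrightarrow> Z = Z'"
    and hf: "\<And>Z W. R Z W \<Longrightarrow> R (rev_zz Z) (rev_zz W)"
begin

lemma ab_key: "\<tau> \<subseteq> ZF \<Longrightarrow> W \<in> ZT \<Longrightarrow> Z0 \<in> ZF \<Longrightarrow> R Z0 W \<Longrightarrow> (\<exists>Z\<in>\<tau>. R Z W) \<longleftrightarrow> Z0 \<in> \<tau>"
  using he by blast

lemma ab_orient:
  assumes t: "\<tau> \<subseteq> ZF" and o: "\<forall>Z\<in>ZF. (Z \<in> \<tau>) \<noteq> (rev_zz Z \<in> \<tau>)" and W: "W \<in> ZT"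
  shows "(\<exists>Z\<in>\<tau>. R Z W) \<noteq> (\<exists>Z\<in>\<tau>. R Z (rev_zz W))"
proof -
  obtain Z0 where Z0: "Z0 \<in> ZF" "R Z0 W" using hb[OF W] by blast
  have 1: "(\<exists>Z\<in>\<tau>. R Z W) \<longleftrightarrow> Z0 \<in> \<tau>" using ab_key[OF t W Z0] .
  have 2: "(\<exists>Z\<in>\<tau>. R Z (rev_zz W)) \<longleftrightarrow> rev_zz Z0 \<in> \<tau>"
    using ab_key[OF t a2[OF W] a1[OF Z0(1)] hf[OF Z0(2)]] .
  show ?thesis unfolding 1 2 using o Z0(1) by blast
qed

lemma ab_inv:
  assumes t: "\<tau> \<subseteq> ZF"
  shows "{W\<in>ZT. \<exists>Z\<in>rev_zz ` \<tau>. R Z W} = rev_zz ` {W\<in>ZT. \<exists>Z\<in>\<tau>. R Z W}"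
proof
  show "{W\<in>ZT. \<exists>Z\<in>rev_zz ` \<tau>. R Z W} \<subseteq> rev_zz ` {W\<in>ZT. \<exists>Z\<in>\<tau>. R Z W}"
  proof
    fix W assume "W \<in> {W\<in>ZT. \<exists>Z\<in>rev_zz ` \<tau>. R Z W}"
    then obtain Z where h: "W \<in> ZT" "Z \<in> \<tau>" "R (rev_zz Z) W" by blast
    have "R Z (rev_zz W)" using hf[OF h(3)] by simp
    then have m: "rev_zz W \<in> {W\<in>ZT. \<exists>Z\<in>\<tau>. R Z W}" using a2[OF h(1)] h(2) by blast
    have "W = rev_zz (rev_zz W)" by simp
    from this m show "W \<in> rev_zz ` {W\<in>ZT. \<exists>Z\<in>\<tau>. R Z W}" by (rule image_eqI)
  qed
  show "rev_zz ` {W\<in>ZT. \<exists>Z\<in>\<tau>. R Z W} \<subseteq> {W\<in>ZT. \<exists>Z\<in>rev_zz ` \<tau>. R Z W}"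
  proof
    fix W assume "W \<in> rev_zz ` {W\<in>ZT. \<exists>Z\<in>\<tau>. R Z W}"
    then obtain W' Z where h: "W = rev_zz W'" "W' \<in> ZT" "Z \<in> \<tau>" "R Z W'" by blast
    have "R (rev_zz Z) W" using hf[OF h(4)] h(1) by simp
    then show "W \<in> {W\<in>ZT. \<exists>Z\<in>rev_zz ` \<tau>. R Z W}" using a2[OF h(2)] h(1,3) by blast
  qed
qed

lemma ab_knot:
  "(\<exists>W. ZT = {W, rev_zz W} \<and> W \<noteq> rev_zz W) \<longleftrightarrow> (\<exists>Z. ZF = {Z, rev_zz Z} \<and> Z \<noteq> rev_zz Z)"
proof
  assume "\<exists>W. ZT = {W, rev_zz W} \<and> W \<noteq> rev_zz W"
  then obtain W where W: "ZT = {W, rev_zz W}" "W \<noteq> rev_zz W" by blast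
  have Wm: "W \<in> ZT" "rev_zz W \<in> ZT" using W by auto
  obtain Z0 where Z0: "Z0 \<in> ZF" "R Z0 W" using hb[OF Wm(1)] by blast
  have RZ0: "R (rev_zz Z0) (rev_zz W)" using hf[OF Z0(2)] .
  have "ZF = {Z0, rev_zz Z0}"
  proof
    show "{Z0, rev_zz Z0} \<subseteq> ZF" using Z0 a1 by blast
    show "ZF \<subseteq> {Z0, rev_zz Z0}"
    proof
      fix Z' assume Z': "Z' \<in> ZF"
      obtain W' where W': "W' \<in> ZT" "R Z' W'" using hc[OF Z'] by blast
      have "W' = W \<or> W' = rev_zz W" using W' W by blast
      then show "Z' \<in> {Z0, rev_zz Z0}"
      proof
        assume "W' = W"
        then have "Z' = Z0" using he[OF Z' Z0(1) Wm(1)] W'(2) Z0(2) by simp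
        then show ?thesis by simp
      next
        assume e: "W' = rev_zz W"
        have "R (rev_zz Z') W" using hf[OF W'(2)] e by simp
        then have "rev_zz Z' = Z0" using he[OF a1[OF Z'] Z0(1) Wm(1)] Z0(2) by simp
        then have "rev_zz (rev_zz Z') = rev_zz Z0" by simp
        then have "Z' = rev_zz Z0" by simp
        then show ?thesis by simp
      qed
    qed
  qed
  moreover have "Z0 \<noteq> rev_zz Z0"
  proof
    assume e: "Z0 = rev_zz Z0"
    then have "R Z0 (rev_zz W)" using RZ0 by simp
    then have "W = rev_zz W" using hd[OF Z0(1) Wm] Z0(2) by simp
    then show False using W(2) by simp
  qed
  ultimately show "\<exists>Z. ZF = {Z, rev_zz Z} \<and> Z \<noteq> rev_zz Z" by blast
next
  assume "\<exists>Z. ZF = {Z, rev_zz Z} \<and> Z \<noteq> rev_zz Z"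
  then obtain Z where Z: "ZF = {Z, rev_zz Z}" "Z \<noteq> rev_zz Z" by blast
  have Zm: "Z \<in> ZF" "rev_zz Z \<in> ZF" using Z by auto
  obtain W0 where W0: "W0 \<in> ZT" "R Z W0" using hc[OF Zm(1)] by blast
  have "ZT = {W0, rev_zz W0}"
  proof
    show "{W0, rev_zz W0} \<subseteq> ZT" using W0 a2 by blast
    show "ZT \<subseteq> {W0, rev_zz W0}"
    proof
      fix W' assume W': "W' \<in> ZT"
      obtain Z' where Z': "Z' \<in> ZF" "R Z' W'" using hb[OF W'] by blast
      have "Z' = Z \<or> Z' = rev_zz Z" using Z' Z by blast
      then show "W' \<in> {W0, rev_zz W0}"
      proof
        assume "Z' = Z"
        then have "W' = W0" using hd[OF Zm(1) W' W0(1)] Z'(2) W0(2) by simp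
        then show ?thesis by simp
      next
        assume e: "Z' = rev_zz Z"
        have "R Z (rev_zz W')" using hf[OF Z'(2)] e by simp
        then have "rev_zz W' = W0" using hd[OF Zm(1) a2[OF W'] W0(1)] W0(2) by simp
        then have "rev_zz (rev_zz W') = rev_zz W0" by simp
        then have "W' = rev_zz W0" by simp
        then show ?thesis by simp
      qed
    qed
  qed
  moreover have "W0 \<noteq> rev_zz W0"
  proof
    assume e: "W0 = rev_zz W0"
    have "R (rev_zz Z) W0" using hf[OF W0(2)] e by simp
    then have "Z = rev_zz Z" using he[OF Zm W0(1)] W0(2) by simp
    then show False using Z(2) by simp
  qed
  ultimately show "\<exists>W. ZT = {W, rev_zz W} \<and> W \<noteq> rev_zz W" by blast
qed

end

lemma hyps:
  assumes tri: "triangulation F"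
  shows "(\<And>Z. Z \<in> zigzags F \<Longrightarrow> rev_zz Z \<in> zigzags F)"
    "(\<And>W. W \<in> zigzags (Tri F) \<Longrightarrow> rev_zz W \<in> zigzags (Tri F))"
    "(\<And>W. W \<in> zigzags (Tri F) \<Longrightarrow> \<exists>Z\<in>zigzags F. Rel F Z W)"
    "(\<And>Z. Z \<in> zigzags F \<Longrightarrow> \<exists>W\<in>zigzags (Tri F). Rel F Z W)"
    "(\<And>Z W W'. Z \<in> zigzags F \<Longrightarrow> W \<in> zigzags (Tri F) \<Longrightarrow> W' \<in> zigzags (Tri F) \<Longrightarrow> Rel F Z W \<Longrightarrow> Rel F Z W' \<Longrightarrow> W = W')"
    "(\<And>Z Z' W. Z \<in> zigzags F \<Longrightarrow> Z' \<in> zigzags F \<Longrightarrow> W \<in> zigzags (Tri F) \<Longrightarrow> Rel F Z W \<Longrightarrow> Rel F Z' W \<Longrightarrow> Z = Z')"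
    "(\<And>Z W. Rel F Z W \<Longrightarrow> Rel F (rev_zz Z) (rev_zz W))"
proof -
  have c3: "\<forall>f\<in>F. card f = 3" using tri unfolding triangulation_def by blast
  show "\<And>Z. Z \<in> zigzags F \<Longrightarrow> rev_zz Z \<in> zigzags F" using zigzags_rev[OF c3] .
  show "\<And>W. W \<in> zigzags (Tri F) \<Longrightarrow> rev_zz W \<in> zigzags (Tri F)" using zigzags_rev[OF tri_c3] .
  show "\<And>Z W. Rel F Z W \<Longrightarrow> Rel F (rev_zz Z) (rev_zz W)" by (rule Rel_rev)
  show "\<exists>Z\<in>zigzags F. Rel F Z W" if W: "W \<in> zigzags (Tri F)" for W
  proof -
    obtain w0 where w0: "W = cyc_class w0" "zigzag (Tri F) w0" using zigzags_E[OF W] by blast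
    obtain t where t: "vzz (Tri F) t" "w0 = edg t" using zigzag_vzz[OF tri_c3 w0(2)] by blast
    obtain c s where cs: "vzz F s" "shift c t = ts s" using P4[OF tri t(1)] by blast
    have z0: "zigzag F (edg s)" using vzz_zigzag[OF c3 cs(1)] .
    have "Lam (edg s) = shift c w0" unfolding Lam_edg[OF cs(1)] cs(2)[symmetric] t(2) edg_shift ..
    then have "Lam (edg s) \<in> W" unfolding w0(1) cyc_mem by blast
    then have "W = cyc_class (Lam (edg s))" using cyc_eq w0(1) by metis
    then have "Rel F (cyc_class (edg s)) W" using R1[OF tri z0 W] by simp
    then show ?thesis using zigzags_I[OF z0] by blast
  qed
  show "\<exists>W\<in>zigzags (Tri F). Rel F Z W" if Z: "Z \<in> zigzags F" for Z
  proof -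
    obtain z0 where z0: "Z = cyc_class z0" "zigzag F z0" using zigzags_E[OF Z] by blast
    have W: "cyc_class (Lam z0) \<in> zigzags (Tri F)" using zigzags_I Lam_fwd[OF tri z0(2)] by blast
    then show ?thesis using R1[OF tri z0(2) W] z0(1) by blast
  qed
  show "W = W'" if Z: "Z \<in> zigzags F" and W: "W \<in> zigzags (Tri F)" and W': "W' \<in> zigzags (Tri F)"
    and r: "Rel F Z W" and r': "Rel F Z W'" for Z W W'
  proof -
    obtain z0 where z0: "Z = cyc_class z0" "zigzag F z0" using zigzags_E[OF Z] by blast
    show ?thesis using R1[OF tri z0(2) W] R1[OF tri z0(2) W'] r r' z0(1) by simp
  qed
  show "Z = Z'" if Z: "Z \<in> zigzags F" and Z': "Z' \<in> zigzags F" and W: "W \<in> zigzags (Tri F)"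
    and r: "Rel F Z W" and r': "Rel F Z' W" for Z Z' W
  proof -
    obtain z0 where z0: "Z = cyc_class z0" "zigzag F z0" using zigzags_E[OF Z] by blast
    obtain z1 where z1: "Z' = cyc_class z1" "zigzag F z1" using zigzags_E[OF Z'] by blast
    have "W = cyc_class (Lam z0)" using R1[OF tri z0(2) W] r z0(1) by simp
    moreover have "W = cyc_class (Lam z1)" using R1[OF tri z1(2) W] r' z1(1) by simp
    ultimately have "Lam z1 \<in> cyc_class (Lam z0)" using cyc_self by metis
    then have "z1 \<in> cyc_class z0" using Lam_inj[OF c3 z0(2) z1(2)] by simp
    then show ?thesis using cyc_eq z0(1) z1(1) by metis
  qed
qed

theorem mainTheorem11:
  fixes F :: "'a set set"
  assumes "triangulation F"
  shows "(\<forall>z. zigzag F z \<longrightarrow>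
            (\<exists>w. interleaved F z w \<and> zigzag (Tri F) w \<and>
                 (\<forall>i. zz_dir w (3 * i) = (Inl (snd (zz_dir z i)), Inl (fst (zz_dir z i))))))
       \<and> (\<forall>\<tau>. z_orientation F \<tau> \<longrightarrow>
            z_orientation (Tri F) (induced F \<tau>) \<and>
            induced F (inv_orient \<tau>) = inv_orient (induced F \<tau>))
       \<and> (z_knotted (Tri F) \<longleftrightarrow> z_knotted F)"
proof (intro conjI allI impI)
  note H = hyps[OF assms]
  show "\<exists>w. interleaved F z w \<and> zigzag (Tri F) w \<and>
                 (\<forall>i. zz_dir w (3 * i) = (Inl (snd (zz_dir z i)), Inl (fst (zz_dir z i))))"
    if "zigzag F z" for z
    using Lam_fwd[OF assms that] by blast
  have ind: "induced F \<tau> = {W \<in> zigzags (Tri F). \<exists>Z\<in>\<tau>. Rel F Z W}" for \<tau>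
    unfolding induced_def Rel_def by blast
  fix \<tau> assume o: "z_orientation F \<tau>"
  have t: "\<tau> \<subseteq> zigzags F" and oo: "\<forall>Z\<in>zigzags F. (Z \<in> \<tau>) \<noteq> (rev_zz Z \<in> \<tau>)"
    using o unfolding z_orientation_def by blast+
  show "z_orientation (Tri F) (induced F \<tau>)"
    unfolding z_orientation_def ind
  proof (intro conjI ballI)
    show "{W \<in> zigzags (Tri F). \<exists>Z\<in>\<tau>. Rel F Z W} \<subseteq> zigzags (Tri F)" by blast
    fix W assume W: "W \<in> zigzags (Tri F)"
    have "(\<exists>Z\<in>\<tau>. Rel F Z W) \<noteq> (\<exists>Z\<in>\<tau>. Rel F Z (rev_zz W))"
      using ab_orient[of "zigzags F" "zigzags (Tri F)" "Rel F", OF H t oo W] .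
    then show "(W \<in> {W \<in> zigzags (Tri F). \<exists>Z\<in>\<tau>. Rel F Z W}) \<noteq>
          (rev_zz W \<in> {W \<in> zigzags (Tri F). \<exists>Z\<in>\<tau>. Rel F Z W})"
      using W H(2)[OF W] by simp
  qed
  show "induced F (inv_orient \<tau>) = inv_orient (induced F \<tau>)"
    unfolding ind inv_orient_def
    using ab_inv[of "zigzags F" "zigzags (Tri F)" "Rel F", OF H t] .
next
  note H = hyps[OF assms]
  show "z_knotted (Tri F) = z_knotted F"
    unfolding z_knotted_def using ab_knot[of "zigzags F" "zigzags (Tri F)" "Rel F", OF H] .
qed


end
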